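(* Let $j=\sqrt{-1}$ and let $a,b\in\mathbb{Z}[j]$ with $ab\neq 0$. Define the $3\times 2$ complex matrix $$X=\begin{pmatrix} X_S\\ X_T\end{pmatrix}=\begin{pmatrix} a & b\\ a & -b^*\\ b & a^*\end{pmatrix},$$ where $X_S=(a\ \ b)$ is the first row and $X_T=\begin{pmatrix} a & -b^*\\ b & a^*\end{pmatrix}$ consists of the last two rows. Then $$\det(X^\dagger X)\geq 2 \qquad\text{and}\qquad \det(X_S X_S^\dagger)\,\det(X_T^\dagger X_T)\geq 1.$$
   Context: $c^*$ denotes the complex conjugate of $c\in\mathbb{C}$, and $M^\dagger$ denotes the conjugate transpose of a complex matrix $M$. $\mathbb{Z}[j]$ is the ring of Gaussian integers. *)

theory Defs
  imports "HOL-Analysis.Analysis"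
begin

definition gauss_int :: "complex set" where
  "gauss_int = {z. Re z \<in> \<int> \<and> Im z \<in> \<int>}"

definition ctrans :: "complex ^'n ^'m \<Rightarrow> complex ^'m ^'n" where
  "ctrans M = (\<chi> i j. cnj (M $ j $ i))"

definition Xmat :: "complex \<Rightarrow> complex \<Rightarrow> complex ^2 ^3" where
  "Xmat a b = vector [vector [a, b], vector [a, - cnj b], vector [b, cnj a]]"

definition XS :: "complex \<Rightarrow> complex \<Rightarrow> complex ^2 ^1" where
  "XS a b = vector [vector [a, b]]"

definition XT :: "complex \<Rightarrow> complex \<Rightarrow> complex ^2 ^2" where
  "XT a b = vector [vector [a, - cnj b], vector [b, cnj a]]"

end

theory Submission
  imports Defs
begin

lemma gi_ge1:
  assumes "z \<in> gauss_int" "z \<noteq> 0"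
  shows "(Re z)^2 + (Im z)^2 \<ge> 1"
proof -
  obtain m where m: "Re z = of_int m" using assms(1) unfolding gauss_int_def by (auto elim: Ints_cases)
  obtain n where n: "Im z = of_int n" using assms(1) unfolding gauss_int_def by (auto elim: Ints_cases)
  have "m \<noteq> 0 \<or> n \<noteq> 0" using assms(2) m n complex_eq_iff by force
  hence "m^2 + n^2 \<ge> 1"
    by (metis add.commute add_increasing zero_le_power2 linorder_not_less not_sum_power2_lt_zero zero_less_power2 int_one_le_iff_zero_less add_pos_nonneg)
  hence "real_of_int (m^2 + n^2) \<ge> 1" by linarith
  thus ?thesis using m n by simp
qed

theorem mainTheorem1:
  fixes a b :: complex
  assumes "a \<in> gauss_int" and "b \<in> gauss_int" and "a * b \<noteq> 0"
  shows "det (ctrans (Xmat a b) ** Xmat a b) \<in> \<real>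
         \<and> Re (det (ctrans (Xmat a b) ** Xmat a b)) \<ge> 2
         \<and> det (XS a b ** ctrans (XS a b)) * det (ctrans (XT a b) ** XT a b) \<in> \<real>
         \<and> Re (det (XS a b ** ctrans (XS a b)) * det (ctrans (XT a b) ** XT a b)) \<ge> 1"
proof -
  define A where "A = (Re a)^2 + (Im a)^2"
  define B where "B = (Re b)^2 + (Im b)^2"
  have A1: "A \<ge> 1" unfolding A_def using gi_ge1 assms by auto
  have B1: "B \<ge> 1" unfolding B_def using gi_ge1 assms by auto
  have d1: "det (ctrans (Xmat a b) ** Xmat a b) = complex_of_real (2*(A+B)^2)"
    unfolding det_2 ctrans_def Xmat_def matrix_matrix_mult_def A_def B_def
    by (simp add: sum_2 sum_3 complex_eq_iff power2_eq_square algebra_simps)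
  have d2: "det (XS a b ** ctrans (XS a b)) * det (ctrans (XT a b) ** XT a b) = complex_of_real ((A+B)^3)"
    unfolding det_2 det_1 ctrans_def XS_def XT_def matrix_matrix_mult_def A_def B_def
    by (simp add: sum_1 sum_2 complex_eq_iff power2_eq_square power3_eq_cube algebra_simps)
  have "2*(A+B)^2 \<ge> 2" proof -
    have "(A+B)^2 \<ge> 1" using A1 B1 by (simp add: one_le_power)
    thus ?thesis by linarith
  qed
  moreover have "(A+B)^3 \<ge> 1" using A1 B1 by (simp add: one_le_power)
  ultimately show ?thesis unfolding d1 d2 by simp
qed

end
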